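(* Every normal finite $C$-space is weakly infinite-dimensional in the sense of Smirnov.
   Context: A set is functionally open if it is a cozero set. $X$ is a finite $C$-space if for every sequence $\{\omega_n\}$ of finite covers of $X$ by functionally open sets there exist $k$ and finite families $\gamma_1,\dots,\gamma_k$ of pairwise disjoint functionally open sets such that each $\gamma_n$ refines $\omega_n$ and $\bigcup_{n=1}^k\gamma_n$ covers $X$. A normal space $X$ is weakly infinite-dimensional in the sense of Smirnov if for every sequence $\{(A_i,B_i)\}_{i\in\mathbb N}$ of pairs of disjoint closed subsets of $X$ there exist partitions $L_i$ between $A_i$ and $B_i$ and $k$ such that $\bigcap_{i=1}^k L_i=\emptyset$. *)

theory Defs
  imports "HOL-Analysis.Analysis"
begin

definition functionally_open :: "'a topology \<Rightarrow> 'a set \<Rightarrow> bool" where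
  "functionally_open X U \<longleftrightarrow>
     (\<exists>f. continuous_map X euclideanreal f \<and> U = {x \<in> topspace X. f x \<noteq> 0})"

definition fo_finite_cover :: "'a topology \<Rightarrow> 'a set set \<Rightarrow> bool" where
  "fo_finite_cover X \<omega> \<longleftrightarrow>
     finite \<omega> \<and> (\<forall>U\<in>\<omega>. functionally_open X U) \<and> topspace X \<subseteq> \<Union>\<omega>"

definition refines :: "'a set set \<Rightarrow> 'a set set \<Rightarrow> bool" where
  "refines \<gamma> \<omega> \<longleftrightarrow> (\<forall>V\<in>\<gamma>. \<exists>U\<in>\<omega>. V \<subseteq> U)"

definition finite_C_space :: "'a topology \<Rightarrow> bool" where
  "finite_C_space X \<longleftrightarrow>
     (\<forall>\<omega> :: nat \<Rightarrow> 'a set set. (\<forall>n. fo_finite_cover X (\<omega> n)) \<longrightarrow>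
        (\<exists>k \<gamma>. (\<forall>n<k. finite (\<gamma> n) \<and> (\<forall>V\<in>\<gamma> n. functionally_open X V)
                     \<and> pairwise disjnt (\<gamma> n) \<and> refines (\<gamma> n) (\<omega> n))
              \<and> topspace X \<subseteq> (\<Union>n<k. \<Union>(\<gamma> n))))"

definition partition_between :: "'a topology \<Rightarrow> 'a set \<Rightarrow> 'a set \<Rightarrow> 'a set \<Rightarrow> bool" where
  "partition_between X A B L \<longleftrightarrow>
     closedin X L \<and>
     (\<exists>U V. openin X U \<and> openin X V \<and> disjnt U V \<and> A \<subseteq> U \<and> B \<subseteq> V
            \<and> topspace X - L = U \<union> V)"

definition smirnov_wid :: "'a topology \<Rightarrow> bool" where
  "smirnov_wid X \<longleftrightarrow>
     (\<forall>A B :: nat \<Rightarrow> 'a set.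
        (\<forall>i. closedin X (A i) \<and> closedin X (B i) \<and> disjnt (A i) (B i)) \<longrightarrow>
        (\<exists>L k. (\<forall>i. partition_between X (A i) (B i) (L i)) \<and> k \<ge> 1 \<and> (\<Inter>i<k. L i) = {}))"

end

theory Submission
  imports Defs
begin

lemma part_lemma:
  assumes f: "continuous_map X euclideanreal f"
    and A: "closedin X A" "f ` A \<subseteq> {0}" and B: "closedin X B" "f ` B \<subseteq> {1}"
    and P: "openin X P" "\<forall>x\<in>P. f x < 2/3" and Q: "openin X Q" "\<forall>x\<in>Q. f x > 1/3"
    and PQ: "disjnt P Q"
  shows "\<exists>L. partition_between X A B L \<and> L \<inter> (P \<union> Q) = {} \<and> L \<subseteq> topspace X"
proof -
  define U where "U = P \<union> {x \<in> topspace X. f x \<in> {..<1/3}}"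
  define V where "V = Q \<union> {x \<in> topspace X. f x \<in> {2/3<..}}"
  have oU: "openin X U" unfolding U_def
    by (intro openin_Un P openin_continuous_map_preimage[OF f]) auto
  have oV: "openin X V" unfolding V_def
    by (intro openin_Un Q openin_continuous_map_preimage[OF f]) auto
  have d: "disjnt U V" using P Q PQ unfolding U_def V_def disjnt_def by force
  have AU: "A \<subseteq> U" using A closedin_subset unfolding U_def by fastforce
  have BV: "B \<subseteq> V" using B closedin_subset unfolding V_def by fastforce
  have UVt: "U \<union> V \<subseteq> topspace X" using oU oV openin_subset by blast
  define L where "L = topspace X - (U \<union> V)"
  have "closedin X L" unfolding L_def using oU oV by blast
  moreover have "topspace X - L = U \<union> V" using UVt unfolding L_def by blast
  ultimately have "partition_between X A B L"
    unfolding partition_between_def using oU oV d AU BV by blast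
  moreover have "L \<inter> (P \<union> Q) = {}" unfolding L_def U_def V_def by blast
  ultimately show ?thesis unfolding L_def by blast
qed

lemma fo_lt:
  assumes f: "continuous_map X euclideanreal f"
  shows "functionally_open X {x \<in> topspace X. f x < c}"
  unfolding functionally_open_def
proof (intro exI conjI)
  show "continuous_map X euclideanreal (\<lambda>x. max 0 (c - f x))"
    using f by (intro continuous_intros) auto
  show "{x \<in> topspace X. f x < c} = {x \<in> topspace X. max 0 (c - f x) \<noteq> 0}" by auto
qed

lemma fo_gt:
  assumes f: "continuous_map X euclideanreal f"
  shows "functionally_open X {x \<in> topspace X. f x > c}"
  unfolding functionally_open_def
proof (intro exI conjI)
  show "continuous_map X euclideanreal (\<lambda>x. max 0 (f x - c))"
    using f by (intro continuous_intros) auto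
  show "{x \<in> topspace X. f x > c} = {x \<in> topspace X. max 0 (f x - c) \<noteq> 0}" by auto
qed

lemma fo_open: "functionally_open X U \<Longrightarrow> openin X U"
  unfolding functionally_open_def
  by (auto intro!: openin_continuous_map_preimage[where Y=euclideanreal and U="-{0}", simplified])

theorem lemma2p3:
  fixes X :: "'a topology"
  assumes "normal_space X" and "finite_C_space X"
  shows "smirnov_wid X"
  unfolding smirnov_wid_def
proof (intro allI impI)
  fix A B :: "nat \<Rightarrow> 'a set"
  assume AB: "\<forall>i. closedin X (A i) \<and> closedin X (B i) \<and> disjnt (A i) (B i)"
  have "\<forall>i. \<exists>g. continuous_map X euclideanreal g \<and> g ` A i \<subseteq> {0} \<and> g ` B i \<subseteq> {1}"
  proof
    fix i
    have "closedin X (A i) \<and> closedin X (B i) \<and> disjnt (A i) (B i)" using AB by blast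
    then show "\<exists>g. continuous_map X euclideanreal g \<and> g ` A i \<subseteq> {0} \<and> g ` B i \<subseteq> {1}"
      using assms(1) unfolding normal_space_iff_Urysohn_alt by (elim allE impE) auto
  qed
  then obtain f where f: "\<And>i. continuous_map X euclideanreal (f i)"
    "\<And>i. f i ` A i \<subseteq> {0}" "\<And>i. f i ` B i \<subseteq> {1}" by metis
  define Uo where "Uo i = {x \<in> topspace X. f i x < 2/3}" for i
  define Vo where "Vo i = {x \<in> topspace X. f i x > 1/3}" for i
  define \<omega> where "\<omega> i = {Uo i, Vo i}" for i
  have cov: "\<forall>n. fo_finite_cover X (\<omega> n)"
    unfolding fo_finite_cover_def \<omega>_def Uo_def Vo_def
  proof (intro allI conjI)
    fix n
    show "\<forall>U\<in>{{x \<in> topspace X. f n x < 2/3}, {x \<in> topspace X. f n x > 1/3}}. functionally_open X U"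
      using fo_lt[OF f(1)] fo_gt[OF f(1)] by blast
  next
    fix n
    show "finite {{x \<in> topspace X. f n x < 2/3}, {x \<in> topspace X. f n x > 1/3}}" by simp
  next
    fix n
    show "topspace X \<subseteq> \<Union>{{x \<in> topspace X. f n x < 2/3}, {x \<in> topspace X. f n x > 1/3}}"
    proof
      fix x assume "x \<in> topspace X"
      moreover have "f n x < 2/3 \<or> f n x > 1/3" by linarith
      ultimately show "x \<in> \<Union>{{x \<in> topspace X. f n x < 2/3}, {x \<in> topspace X. f n x > 1/3}}" by blast
    qed
  qed
  obtain k \<gamma> where g: "\<forall>n<k. finite (\<gamma> n) \<and> (\<forall>V\<in>\<gamma> n. functionally_open X V)
                     \<and> pairwise disjnt (\<gamma> n) \<and> refines (\<gamma> n) (\<omega> n)"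
    and gc: "topspace X \<subseteq> (\<Union>n<k. \<Union>(\<gamma> n))"
  proof -
    have "\<exists>k \<gamma>. (\<forall>n<k. finite (\<gamma> n) \<and> (\<forall>V\<in>\<gamma> n. functionally_open X V)
                     \<and> pairwise disjnt (\<gamma> n) \<and> refines (\<gamma> n) (\<omega> n))
              \<and> topspace X \<subseteq> (\<Union>n<k. \<Union>(\<gamma> n))"
      using assms(2) cov unfolding finite_C_space_def by (elim allE[of _ \<omega>] impE) auto
    then show ?thesis using that by blast
  qed
  define P where "P i = (if i < k then \<Union>{W\<in>\<gamma> i. W \<subseteq> Uo i} else {})" for i
  define Q where "Q i = (if i < k then \<Union>{W\<in>\<gamma> i. \<not> W \<subseteq> Uo i} else {})" for i
  have "\<exists>L. partition_between X (A i) (B i) L \<and> L \<inter> (P i \<union> Q i) = {} \<and> L \<subseteq> topspace X" for i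
  proof (rule part_lemma[OF f(1)])
    show "closedin X (A i)" "closedin X (B i)" using AB by auto
    show "f i ` A i \<subseteq> {0}" "f i ` B i \<subseteq> {1}" using f by auto
    have ow: "openin X W" if "i < k" "W \<in> \<gamma> i" for W
      using g that fo_open by blast
    show "openin X (P i)" unfolding P_def using ow by (auto intro!: openin_Union)
    show "openin X (Q i)" unfolding Q_def using ow by (auto intro!: openin_Union)
    show "\<forall>x\<in>P i. f i x < 2/3" unfolding P_def Uo_def by auto
    show "\<forall>x\<in>Q i. f i x > 1/3"
    proof
      fix x assume "x \<in> Q i"
      then obtain W where W: "i < k" "W \<in> \<gamma> i" "\<not> W \<subseteq> Uo i" "x \<in> W"
        unfolding Q_def by (auto split: if_splits)
      then have "W \<subseteq> Vo i" using g unfolding refines_def \<omega>_def by blast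
      then show "f i x > 1/3" using W unfolding Vo_def by auto
    qed
    show "disjnt (P i) (Q i)"
    proof (cases "i < k")
      case True
      then have pw: "pairwise disjnt (\<gamma> i)" using g by blast
      have "P i \<inter> Q i = {}"
      proof (rule ccontr)
        assume "P i \<inter> Q i \<noteq> {}"
        then obtain x W W' where "W \<in> \<gamma> i" "W \<subseteq> Uo i" "W' \<in> \<gamma> i" "\<not> W' \<subseteq> Uo i" "x \<in> W" "x \<in> W'"
          unfolding P_def Q_def using True by auto
        then show False using pw unfolding pairwise_def disjnt_def by blast
      qed
      then show ?thesis unfolding disjnt_def .
    qed (auto simp: P_def Q_def)
  qed
  then obtain L where L: "\<And>i. partition_between X (A i) (B i) (L i)"
    "\<And>i. L i \<inter> (P i \<union> Q i) = {}" "\<And>i. L i \<subseteq> topspace X" by metis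
  have "(\<Inter>i<Suc k. L i) = {}"
  proof (rule ccontr)
    assume "(\<Inter>i<Suc k. L i) \<noteq> {}"
    then obtain x where x: "\<And>i. i < Suc k \<Longrightarrow> x \<in> L i" by blast
    then have "x \<in> topspace X" using L(3)[of 0] by blast
    then obtain n W where nW: "n < k" "W \<in> \<gamma> n" "x \<in> W" using gc by blast
    then have "x \<in> P n \<union> Q n" unfolding P_def Q_def by auto
    moreover have "x \<in> L n" using x nW by simp
    ultimately show False using L(2)[of n] by blast
  qed
  then show "\<exists>L k. (\<forall>i. partition_between X (A i) (B i) (L i)) \<and> k \<ge> 1 \<and> (\<Inter>i<k. L i) = {}"
    using L(1) by (intro exI[of _ L] exI[of _ "Suc k"]) auto
qed

end
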